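(* Let $H:\mathbb{R}^N\times\mathbb{R}^N\to\mathbb{R}$ be a skew-symmetric, finite, convex-concave function satisfying $|H(x_1,y_1)-H(x_2,y_2)|\le\Lambda\|x_1-x_2\|+\Lambda\|y_1-y_2\|$ for some $\Lambda>0$. Let $A\subset\mathbb{R}^N$ be a closed ball and $B\subset\mathbb{R}^N$ a compact set with non-empty interior, and fix $u\in\mathbb{R}^N$. Then there is a dense subset $A'\subset A$ such that for each $x\in A'$ there is a dense subset $B_{x,u}$ of $B$ with $$\nabla_1H(x,y)(u)=-\nabla_1H(x,y)(-u)\quad\text{for all }y\in B_{x,u}.$$
   Context: $\nabla_1H(x,y)(u)=\lim_{\lambda\to0^+}\frac{H(x+\lambda u,y)-H(x,y)}{\lambda}$ denotes the one-sided directional derivative in the first variable, which exists since $H$ is convex in its first variable. Skew-symmetric means $H(x,y)=-H(y,x)$; convex-concave means convex in the first variable and concave in the second. *)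

theory Defs
  imports "HOL-Analysis.Analysis"
begin

definition dir_deriv1 :: "('a::real_normed_vector \<Rightarrow> 'a \<Rightarrow> real) \<Rightarrow> 'a \<Rightarrow> 'a \<Rightarrow> 'a \<Rightarrow> real" where
  "dir_deriv1 H x y u = Lim (at_right (0::real)) (\<lambda>t. (H (x + t *\<^sub>R u) y - H x y) / t)"

end

theory Submission
  imports Defs
begin

lemma slope_mono:
  fixes f :: "real \<Rightarrow> real"
  assumes f: "convex_on UNIV f" and "h \<noteq> 0" "k \<noteq> 0" "h \<le> k"
  shows "(f (t+h) - f t)/h \<le> (f (t+k) - f t)/k"
proof (cases "h = k")
  case True then show ?thesis by simp
next
  case False
  then have hk: "h < k" using assms by simp
  consider "h < 0" "0 < k" | "0 < h" | "k < 0" using assms hk by linarith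
  then show ?thesis
  proof cases
    case 1
    from convex_on_slope_le[OF f, of "t+h" "t+k" t] 1
    have "(f (t+h) - f t) / ((t+h) - t) \<le> (f t - f (t+k)) / (t - (t+k))"
      by (meson UNIV_I less_add_same_cancel1 add_less_same_cancel1 order_trans)
    then show ?thesis by (simp add: minus_divide_left)
  next
    case 2
    from convex_on_slope_le(1)[OF f, of t "t+k" "t+h"] 2 hk
    have "(f t - f (t+h)) / (t - (t+h)) \<le> (f t - f (t+k)) / (t - (t+k))" by simp
    then show ?thesis by (smt (verit) minus_divide_divide)
  next
    case 3
    from convex_on_slope_le(2)[OF f, of "t+h" t "t+k"] 3 hk
    have "(f (t+h) - f t) / ((t+h) - t) \<le> (f (t+k) - f t) / ((t+k) - t)" by simp
    then show ?thesis by simp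
  qed
qed

lemma convex_1d_countable:
  fixes f :: "real \<Rightarrow> real"
  assumes f: "convex_on UNIV f"
  defines "R \<equiv> \<lambda>t. Inf ((\<lambda>h. (f (t+h) - f t)/h) ` {0<..})"
    and "L \<equiv> \<lambda>t. Sup ((\<lambda>h. (f (t + - h) - f t)/ - h) ` {0<..})"
  shows "\<And>t. ((\<lambda>h. (f (t+h) - f t)/h) \<longlongrightarrow> R t) (at_right 0)"
    and "\<And>t. ((\<lambda>h. (f (t + - h) - f t)/ - h) \<longlongrightarrow> L t) (at_right 0)"
    and "countable {t. L t \<noteq> R t}"
proof -
  note sm = slope_mono[OF f]
  have bb: "bdd_below ((\<lambda>h. (f (t+h) - f t)/h) ` {0<..})" for t
    by (rule bdd_belowI2[where m="(f (t + -1) - f t)/ -1"]) (rule sm, auto)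
  have ba: "bdd_above ((\<lambda>h. (f (t + - h) - f t)/ - h) ` {0<..})" for t
    by (rule bdd_aboveI2[where M="(f (t + 1) - f t)/ 1"]) (rule sm, auto)
  have Rle: "R t \<le> (f (t+h) - f t)/h" if "h > 0" for t h
    unfolding R_def using that by (intro cInf_lower bb) auto
  have Lge: "(f (t + - h) - f t)/ - h \<le> L t" if "h > 0" for t h
    unfolding L_def using that by (intro cSup_upper ba) auto
  show "((\<lambda>h. (f (t+h) - f t)/h) \<longlongrightarrow> R t) (at_right 0)" for t
  proof (rule order_tendstoI)
    fix a assume "a < R t"
    show "\<forall>\<^sub>F h in at_right 0. a < (f (t+h) - f t)/h"
      using eventually_at_right_real[OF zero_less_one] by eventually_elim (metis Rle greaterThanLessThan_iff less_le_trans \<open>a < R t\<close>)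
  next
    fix a assume "R t < a"
    then obtain h0 where h0: "h0 > 0" "(f (t+h0) - f t)/h0 < a"
      using cInf_less_iff[OF _ bb[of t], of a] \<open>R t < a\<close> unfolding R_def by auto
    have "(f (t+h) - f t)/h < a" if "h \<in> {0<..<h0}" for h using sm[of h h0 t] that h0 by auto
    then show "\<forall>\<^sub>F h in at_right 0. (f (t+h) - f t)/h < a"
      by (rule eventually_mono[OF eventually_at_right_real[OF h0(1)]])
  qed
  show "((\<lambda>h. (f (t + - h) - f t)/ - h) \<longlongrightarrow> L t) (at_right 0)" for t
  proof (rule order_tendstoI)
    fix a assume "a > L t"
    show "\<forall>\<^sub>F h in at_right 0. (f (t + - h) - f t)/ - h < a"
      using eventually_at_right_real[OF zero_less_one] by eventually_elim (metis Lge greaterThanLessThan_iff le_less_trans \<open>a > L t\<close>)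
  next
    fix a assume "L t > a"
    then obtain h0 where h0: "h0 > 0" "a < (f (t + - h0) - f t)/ - h0"
      using less_cSup_iff[OF _ ba[of t], of a] \<open>L t > a\<close> unfolding L_def by auto
    have "a < (f (t + - h) - f t)/ - h" if "h \<in> {0<..<h0}" for h using sm[of "-h0" "-h" t] that h0 by auto
    then show "\<forall>\<^sub>F h in at_right 0. a < (f (t + - h) - f t)/ - h"
      by (rule eventually_mono[OF eventually_at_right_real[OF h0(1)]])
  qed
  have LR: "L t \<le> R t" for t
    unfolding L_def R_def
    by (rule cSup_least, simp, clarify, rule cInf_greatest, simp, clarify, rule sm) auto
  have RL: "R s \<le> L t" if "s < t" for s t
  proof -
    have "R s \<le> (f (s + (t-s)) - f s)/(t-s)" using Rle[of "t-s" s] that by simp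
    also have "\<dots> = (f (t + - (t-s)) - f t)/ - (t-s)"
      by (simp add: divide_simps) argo
    also have "\<dots> \<le> L t" using Lge[of "t-s" t] that by simp
    finally show ?thesis .
  qed
  define S where "S = {t. L t \<noteq> R t}"
  define g where "g t = (SOME r. r \<in> \<rat> \<and> L t < r \<and> r < R t)" for t
  have g: "g t \<in> \<rat> \<and> L t < g t \<and> g t < R t" if "t \<in> S" for t
  proof -
    have "L t < R t" using that LR[of t] unfolding S_def by auto
    from Rats_dense_in_real[OF this] show ?thesis unfolding g_def by (metis (mono_tags, lifting) someI_ex)
  qed
  have inj: "inj_on g S"
  proof (rule inj_onI, rule ccontr)
    fix s t assume st: "s \<in> S" "t \<in> S" "g s = g t" "s \<noteq> t"
    show False
    proof (cases "s < t")
      case True thus False using g[OF st(1)] g[OF st(2)] RL[OF True] st(3) by linarith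
    next
      case False then have "t < s" using st by linarith
      thus False using g[OF st(1)] g[OF st(2)] RL[of t s] st(3) by linarith
    qed
  qed
  have "countable (g ` S)" by (rule countable_subset[OF _ countable_rat]) (use g in auto)
  then show "countable {t. L t \<noteq> R t}" using countable_image_inj_on inj S_def by blast
qed

theorem proposition3p2:
  fixes H :: "'a::euclidean_space \<Rightarrow> 'a \<Rightarrow> real"
    and \<Lambda> r :: real and c u :: 'a and B :: "'a set"
  assumes skew: "\<And>x y. H x y = - H y x"
    and convex: "\<And>y. convex_on UNIV (\<lambda>x. H x y)"
    and concave: "\<And>x. concave_on UNIV (\<lambda>y. H x y)"
    and Lpos: "\<Lambda> > 0"
    and lip: "\<And>x1 y1 x2 y2. \<bar>H x1 y1 - H x2 y2\<bar> \<le> \<Lambda> * norm (x1 - x2) + \<Lambda> * norm (y1 - y2)"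
    and rpos: "r > 0"
    and Bcpt: "compact B"
    and Bint: "interior B \<noteq> {}"
  shows "\<exists>A'. A' \<subseteq> cball c r \<and> cball c r \<subseteq> closure A' \<and>
           (\<forall>x\<in>A'. \<exists>Bxu. Bxu \<subseteq> B \<and> B \<subseteq> closure Bxu \<and>
              (\<forall>y\<in>Bxu. dir_deriv1 H x y u = - dir_deriv1 H x y (- u)))"
proof -
  obtain D where D: "countable D" "D \<subseteq> B" "B \<subseteq> closure D" using separable by blast
  define Good where "Good x y \<longleftrightarrow> dir_deriv1 H x y u = - dir_deriv1 H x y (- u)" for x y
  have lineconv: "convex_on UNIV (\<lambda>s. H (p + s *\<^sub>R u) y)" for p y
  proof (rule convex_onI)
    fix s1 s2 :: real and t :: real assume t: "0 < t" "t < 1"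
    have eq: "p + ((1 - t) *\<^sub>R s1 + t *\<^sub>R s2) *\<^sub>R u = (1 - t) *\<^sub>R (p + s1 *\<^sub>R u) + t *\<^sub>R (p + s2 *\<^sub>R u)"
      by (simp add: algebra_simps)
    show "H (p + ((1 - t) *\<^sub>R s1 + t *\<^sub>R s2) *\<^sub>R u) y \<le> (1 - t) * H (p + s1 *\<^sub>R u) y + t * H (p + s2 *\<^sub>R u) y"
      unfolding eq by (rule convex_onD[OF convex]) (use t in auto)
  qed simp
  have linebad: "countable {s. \<not> Good (p + s *\<^sub>R u) y}" for p y
  proof -
    define f where "f s = H (p + s *\<^sub>R u) y" for s
    have fc: "convex_on UNIV f" unfolding f_def by (rule lineconv)
    define R where "R t = Inf ((\<lambda>h. (f (t+h) - f t)/h) ` {0<..})" for t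
    define L where "L t = Sup ((\<lambda>h. (f (t + - h) - f t)/ - h) ` {0<..})" for t
    note cc = convex_1d_countable[OF fc, folded R_def L_def]
    have "Good (p + s *\<^sub>R u) y" if "L s = R s" for s
    proof -
      have e1: "H (p + s *\<^sub>R u + h *\<^sub>R u) y = f (s + h)" for h
        unfolding f_def by (simp add: algebra_simps)
      have e2: "H (p + s *\<^sub>R u + h *\<^sub>R - u) y = f (s + - h)" for h
        unfolding f_def by (simp add: algebra_simps)
      have e0: "H (p + s *\<^sub>R u) y = f s" by (simp add: f_def)
      have d1: "dir_deriv1 H (p + s *\<^sub>R u) y u = R s"
        unfolding dir_deriv1_def e1 e0
        by (rule tendsto_Lim[OF trivial_limit_at_right_real]) (rule cc(1))
      have "((\<lambda>h. - ((f (s + - h) - f s)/ - h)) \<longlongrightarrow> - L s) (at_right 0)"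
        by (intro tendsto_minus cc(2))
      then have "((\<lambda>h. (f (s + - h) - f s)/ h) \<longlongrightarrow> - L s) (at_right 0)"
        by simp
      then have d2: "dir_deriv1 H (p + s *\<^sub>R u) y (- u) = - L s"
        unfolding dir_deriv1_def e2 e0
        by (rule tendsto_Lim[OF trivial_limit_at_right_real])
      show ?thesis unfolding Good_def d1 d2 using that by simp
    qed
    then have "{s. \<not> Good (p + s *\<^sub>R u) y} \<subseteq> {t. L t \<noteq> R t}" by blast
    then show ?thesis using cc(3) countable_subset by blast
  qed
  define A' where "A' = {x \<in> cball c r. \<forall>y\<in>D. Good x y}"
  have dense: "cball c r \<subseteq> closure A'"
  proof
    fix z assume z: "z \<in> cball c r"
    show "z \<in> closure A'"
      unfolding closure_approachable
    proof (intro allI impI)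
      fix e :: real assume e: "e > 0"
      have "z \<in> closure (ball c r)" using z rpos by simp
      then obtain z' where z': "z' \<in> ball c r" "dist z' z < e/2"
        using e closure_approachable[of z "ball c r"] by (meson half_gt_zero)
      define d0 where "d0 = min (r - dist c z') (e/2)"
      have d0: "d0 > 0" using z' e unfolding d0_def by auto
      define I where "I = {0<..<d0 / (norm u + 1)}"
      have "uncountable I" unfolding I_def using d0
        by (simp add: uncountable_open_interval add_nonneg_pos)
      moreover have "countable (\<Union>y\<in>D. {s. \<not> Good (z' + s *\<^sub>R u) y})"
        using D(1) linebad by blast
      ultimately obtain s where s: "s \<in> I" "s \<notin> (\<Union>y\<in>D. {s. \<not> Good (z' + s *\<^sub>R u) y})"
        by (metis countable_subset subsetI)
      have "norm (s *\<^sub>R u) = s * norm u" using s(1) unfolding I_def by simp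
      also have "\<dots> < d0"
      proof -
        have "s * norm u \<le> s * (norm u + 1)" using s(1) unfolding I_def by simp
        also have "\<dots> < d0"
        proof -
          have np: "norm u + 1 > 0" by (simp add: add_nonneg_pos)
          show ?thesis using s(1) pos_less_divide_eq[OF np] unfolding I_def by simp
        qed
        finally show ?thesis .
      qed
      finally have sn: "norm (s *\<^sub>R u) < d0" .
      define x where "x = z' + s *\<^sub>R u"
      have dxz: "dist x z' < d0" unfolding x_def dist_norm using sn by simp
      have "x \<in> cball c r"
        using dxz z'(1) dist_triangle[of c x z'] unfolding d0_def by (simp add: dist_commute)
      moreover have "\<forall>y\<in>D. Good x y" using s(2) unfolding x_def by blast
      ultimately have "x \<in> A'" unfolding A'_def by blast
      moreover have "dist x z < e"
        using dxz z'(2) dist_triangle[of x z z'] unfolding d0_def by linarith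
      ultimately show "\<exists>x\<in>A'. dist x z < e" by blast
    qed
  qed
  show ?thesis
    apply (rule exI[of _ A'])
    using dense D unfolding A'_def Good_def by blast
qed

end
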